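(* Let $M$ be a closed manifold and $\phi\in A^1(\mathbb{R}^2,M)$. Then any two dense orbits of $\phi$ are homeomorphic (indeed their isotropy groups coincide).
   Context: $A^1(\mathbb{R}^2,M)$ is the set of actions $\phi:\mathbb{R}^2\times M\to M$ of $\mathbb{R}^2$ on $M$ with $C^1$ infinitesimal generators. The orbit of $p$ is $\mathcal{O}_p=\{\phi(\omega,p):\omega\in\mathbb{R}^2\}$, equipped with the topology making $\omega\mapsto\phi(\omega,p)$ induce a homeomorphism $\mathbb{R}^2/G_p\to\mathcal{O}_p$, where $G_p=\{\omega\in\mathbb{R}^2:\phi(\omega,p)=p\}$ is the isotropy group of $p$. An orbit is dense if it is dense in $M$. *)

theory Defs
  imports "HOL-Analysis.Analysis"
begin

text \<open>A closed (compact, boundaryless) \<open>C\<^sup>1\<close> manifold, realised as an embedded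
  \<open>C\<^sup>1\<close> submanifold of a Euclidean space: every point has a neighbourhood in \<open>M\<close>
  which is the image of a relatively open subset of a linear subspace \<open>S\<close> under a
  \<open>C\<^sup>1\<close> immersion that is a homeomorphism onto that neighbourhood.\<close>

definition c1_submanifold :: "'a::euclidean_space set \<Rightarrow> bool" where
  "c1_submanifold M \<longleftrightarrow>
     (\<forall>p\<in>M. \<exists>(S::'a set) U V h g h'.
        subspace S \<and> open U \<and> p \<in> U \<and> V \<subseteq> S \<and> openin (top_of_set S) V \<and>
        homeomorphism V (M \<inter> U) h g \<and>
        (\<forall>x\<in>V. (h has_derivative blinfun_apply (h' x)) (at x within V) \<and>
                inj_on (blinfun_apply (h' x)) S) \<and>
        continuous_on V h')"

definition closed_manifold :: "'a::euclidean_space set \<Rightarrow> bool" where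
  "closed_manifold M \<longleftrightarrow> compact M \<and> c1_submanifold M"

definition c1_field_on :: "'a::euclidean_space set \<Rightarrow> ('a \<Rightarrow> 'a) \<Rightarrow> bool" where
  "c1_field_on M X \<longleftrightarrow>
     (\<exists>U X'. open U \<and> M \<subseteq> U \<and>
        (\<forall>x\<in>U. (X has_derivative blinfun_apply (X' x)) (at x)) \<and> continuous_on U X')"

definition R2_action :: "'a::euclidean_space set \<Rightarrow> (real \<times> real \<Rightarrow> 'a \<Rightarrow> 'a) \<Rightarrow> bool" where
  "R2_action M \<phi> \<longleftrightarrow>
     continuous_on (UNIV \<times> M) (\<lambda>(\<omega>, p). \<phi> \<omega> p) \<and>
     (\<forall>\<omega> p. p \<in> M \<longrightarrow> \<phi> \<omega> p \<in> M) \<and>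
     (\<forall>p\<in>M. \<phi> 0 p = p) \<and>
     (\<forall>\<omega> \<eta> p. p \<in> M \<longrightarrow> \<phi> (\<omega> + \<eta>) p = \<phi> \<omega> (\<phi> \<eta> p))"

definition A1_action :: "'a::euclidean_space set \<Rightarrow> (real \<times> real \<Rightarrow> 'a \<Rightarrow> 'a) \<Rightarrow> bool" where
  "A1_action M \<phi> \<longleftrightarrow> R2_action M \<phi> \<and>
     (\<exists>X Y. c1_field_on M X \<and> c1_field_on M Y \<and>
        (\<forall>p\<in>M. ((\<lambda>t. \<phi> (t, 0) p) has_vector_derivative X p) (at 0) \<and>
                ((\<lambda>t. \<phi> (0, t) p) has_vector_derivative Y p) (at 0)))"

definition orbit :: "(real \<times> real \<Rightarrow> 'a \<Rightarrow> 'a) \<Rightarrow> 'a \<Rightarrow> 'a set" where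
  "orbit \<phi> p = range (\<lambda>\<omega>. \<phi> \<omega> p)"

definition isotropy :: "(real \<times> real \<Rightarrow> 'a \<Rightarrow> 'a) \<Rightarrow> 'a \<Rightarrow> (real \<times> real) set" where
  "isotropy \<phi> p = {\<omega>. \<phi> \<omega> p = p}"

text \<open>The orbit topology: the quotient topology induced by \<open>\<omega> \<mapsto> \<phi> \<omega> p\<close>, i.e. the
  topology making \<open>\<real>\<^sup>2/G\<^sub>p \<rightarrow> \<O>\<^sub>p\<close> a homeomorphism.\<close>
definition orbit_topology :: "(real \<times> real \<Rightarrow> 'a \<Rightarrow> 'a) \<Rightarrow> 'a \<Rightarrow> 'a topology" where
  "orbit_topology \<phi> p =
     topology (\<lambda>U. U \<subseteq> orbit \<phi> p \<and> open {\<omega>. \<phi> \<omega> p \<in> U})"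

definition dense_orbit :: "'a::topological_space set \<Rightarrow> (real \<times> real \<Rightarrow> 'a \<Rightarrow> 'a) \<Rightarrow> 'a \<Rightarrow> bool" where
  "dense_orbit M \<phi> p \<longleftrightarrow> p \<in> M \<and> M \<subseteq> closure (orbit \<phi> p)"

end

theory Submission
  imports Defs
begin

lemma orbit_top_open:
  "openin (orbit_topology \<phi> p) U \<longleftrightarrow> U \<subseteq> orbit \<phi> p \<and> open {\<omega>. \<phi> \<omega> p \<in> U}"
proof -
  have i: "\<forall>S T. (S \<subseteq> orbit \<phi> p \<and> open {\<omega>. \<phi> \<omega> p \<in> S}) \<longrightarrow> (T \<subseteq> orbit \<phi> p \<and> open {\<omega>. \<phi> \<omega> p \<in> T})
      \<longrightarrow> (S \<inter> T \<subseteq> orbit \<phi> p \<and> open {\<omega>. \<phi> \<omega> p \<in> S \<inter> T})"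
  proof (intro allI impI)
    fix S T assume "S \<subseteq> orbit \<phi> p \<and> open {\<omega>. \<phi> \<omega> p \<in> S}"
      "T \<subseteq> orbit \<phi> p \<and> open {\<omega>. \<phi> \<omega> p \<in> T}"
    moreover have "{\<omega>. \<phi> \<omega> p \<in> S \<inter> T} = {\<omega>. \<phi> \<omega> p \<in> S} \<inter> {\<omega>. \<phi> \<omega> p \<in> T}" by auto
    ultimately show "S \<inter> T \<subseteq> orbit \<phi> p \<and> open {\<omega>. \<phi> \<omega> p \<in> S \<inter> T}" by auto
  qed
  have u: "\<forall>K. (\<forall>S\<in>K. S \<subseteq> orbit \<phi> p \<and> open {\<omega>. \<phi> \<omega> p \<in> S}) \<longrightarrow> (\<Union>K \<subseteq> orbit \<phi> p \<and> open {\<omega>. \<phi> \<omega> p \<in> \<Union>K})"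
  proof (intro allI impI)
    fix K assume K: "\<forall>S\<in>K. S \<subseteq> orbit \<phi> p \<and> open {\<omega>. \<phi> \<omega> p \<in> S}"
    have "{\<omega>. \<phi> \<omega> p \<in> \<Union>K} = (\<Union>S\<in>K. {\<omega>. \<phi> \<omega> p \<in> S})" by auto
    then show "\<Union>K \<subseteq> orbit \<phi> p \<and> open {\<omega>. \<phi> \<omega> p \<in> \<Union>K}" using K by auto
  qed
  have "istopology (\<lambda>U. U \<subseteq> orbit \<phi> p \<and> open {\<omega>. \<phi> \<omega> p \<in> U})"
    unfolding istopology_def using i u by blast
  then show ?thesis unfolding orbit_topology_def by simp
qed

lemma topspace_orbit: "topspace (orbit_topology \<phi> p) = orbit \<phi> p"
proof -
  have "openin (orbit_topology \<phi> p) (orbit \<phi> p)"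
    unfolding orbit_top_open by (simp add: orbit_def)
  then show ?thesis using openin_subset[of "orbit_topology \<phi> p"] orbit_top_open
    by (metis openin_topspace subset_antisym)
qed

lemma cont_orbit:
  assumes eq: "\<And>\<omega> \<eta>. \<phi> \<omega> p = \<phi> \<eta> p \<Longrightarrow> \<phi> \<omega> q = \<phi> \<eta> q"
    and f_def: "f = (\<lambda>x. \<phi> (SOME \<omega>. \<phi> \<omega> p = x) q)"
  shows "continuous_map (orbit_topology \<phi> p) (orbit_topology \<phi> q) f"
    and "\<And>\<omega>. f (\<phi> \<omega> p) = \<phi> \<omega> q"
proof -
  show fe: "\<And>\<omega>. f (\<phi> \<omega> p) = \<phi> \<omega> q"
    unfolding f_def by (rule eq, rule someI_ex) auto
  show "continuous_map (orbit_topology \<phi> p) (orbit_topology \<phi> q) f"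
    unfolding continuous_map_def topspace_orbit
  proof (intro conjI allI impI)
    show "f \<in> orbit \<phi> p \<rightarrow> orbit \<phi> q" using fe by (auto simp: orbit_def)
  next
    fix U assume "openin (orbit_topology \<phi> q) U"
    then have "open {\<omega>. \<phi> \<omega> q \<in> U}" by (simp add: orbit_top_open)
    moreover have "{\<omega>. \<phi> \<omega> p \<in> {x \<in> orbit \<phi> p. f x \<in> U}} = {\<omega>. \<phi> \<omega> q \<in> U}"
      using fe by (auto simp: orbit_def)
    ultimately show "openin (orbit_topology \<phi> p) {x \<in> orbit \<phi> p. f x \<in> U}"
      by (simp add: orbit_top_open)
  qed
qed

lemma R2_comp: "R2_action M \<phi> \<Longrightarrow> x \<in> M \<Longrightarrow> \<phi> (\<omega> + \<eta>) x = \<phi> \<omega> (\<phi> \<eta> x)"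
  unfolding R2_action_def by blast

lemma R2_zero: "R2_action M \<phi> \<Longrightarrow> x \<in> M \<Longrightarrow> \<phi> 0 x = x"
  unfolding R2_action_def by blast

lemma R2_in: "R2_action M \<phi> \<Longrightarrow> x \<in> M \<Longrightarrow> \<phi> \<omega> x \<in> M"
  unfolding R2_action_def by blast

lemma iso_sub:
  fixes M :: "'a::euclidean_space set" and \<phi> :: "real \<times> real \<Rightarrow> 'a \<Rightarrow> 'a"
  assumes "closed M" and A: "R2_action M \<phi>" and "dense_orbit M \<phi> p" and "q \<in> M"
  shows "isotropy \<phi> p \<subseteq> isotropy \<phi> q"
proof
  fix \<omega> assume "\<omega> \<in> isotropy \<phi> p"
  then have w: "\<phi> \<omega> p = p" by (simp add: isotropy_def)
  have pM: "p \<in> M" and dense: "M \<subseteq> closure (orbit \<phi> p)" using assms(3) by (auto simp: dense_orbit_def)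
  have c0: "continuous_on (UNIV \<times> M) (\<lambda>(\<omega>, p). \<phi> \<omega> p)" using A by (simp add: R2_action_def)
  have "continuous_on M (\<lambda>x. (\<lambda>(\<omega>, p). \<phi> \<omega> p) (\<omega>, x))"
    by (rule continuous_on_compose2[OF c0]) (auto intro!: continuous_intros)
  then have "continuous_on M (\<lambda>x. \<phi> \<omega> x - x)" by (auto intro!: continuous_intros)
  then have cl: "closed {x \<in> M. \<phi> \<omega> x - x = 0}"
    by (rule continuous_closed_preimage_constant) fact
  have "orbit \<phi> p \<subseteq> {x \<in> M. \<phi> \<omega> x - x = 0}"
  proof
    fix x assume "x \<in> orbit \<phi> p"
    then obtain \<eta> where x: "x = \<phi> \<eta> p" by (auto simp: orbit_def)
    have "\<phi> \<omega> x = \<phi> (\<omega> + \<eta>) p" using R2_comp[OF A pM] x by simp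
    also have "\<dots> = \<phi> (\<eta> + \<omega>) p" by (simp add: add.commute)
    also have "\<dots> = x" using R2_comp[OF A pM] x w by simp
    finally show "x \<in> {x \<in> M. \<phi> \<omega> x - x = 0}" using R2_in[OF A pM] x by simp
  qed
  then have "closure (orbit \<phi> p) \<subseteq> {x \<in> M. \<phi> \<omega> x - x = 0}"
    using cl closure_minimal by blast
  then show "\<omega> \<in> isotropy \<phi> q" using dense assms(4) by (auto simp: isotropy_def)
qed

lemma same_iso_eq:
  assumes A: "R2_action M \<phi>" and "p \<in> M" "q \<in> M" and I: "isotropy \<phi> p = isotropy \<phi> q"
    and e: "\<phi> \<omega> p = \<phi> \<eta> p"
  shows "\<phi> \<omega> q = \<phi> \<eta> q"
proof -
  have "\<phi> (-\<eta> + \<omega>) p = \<phi> (-\<eta>) (\<phi> \<eta> p)" using R2_comp[OF A assms(2), of "-\<eta>" \<omega>] e by simp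
  also have "\<dots> = \<phi> (-\<eta> + \<eta>) p" using R2_comp[OF A assms(2), of "-\<eta>" \<eta>] by simp
  also have "\<dots> = p" using R2_zero[OF A assms(2)] by simp
  finally have "-\<eta> + \<omega> \<in> isotropy \<phi> q" using I by (auto simp: isotropy_def)
  then have "\<phi> (-\<eta> + \<omega>) q = q" by (simp add: isotropy_def)
  then have "\<phi> \<eta> (\<phi> (-\<eta> + \<omega>) q) = \<phi> \<eta> q" by simp
  then show ?thesis using R2_comp[OF A assms(3), of \<eta> "-\<eta> + \<omega>"] by simp
qed

theorem mainTheorem3:
  fixes M :: "'a::euclidean_space set" and \<phi> :: "real \<times> real \<Rightarrow> 'a \<Rightarrow> 'a"
  assumes "closed_manifold M" and "A1_action M \<phi>"
    and "dense_orbit M \<phi> p" and "dense_orbit M \<phi> q"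
  shows "isotropy \<phi> p = isotropy \<phi> q \<and>
         orbit_topology \<phi> p homeomorphic_space orbit_topology \<phi> q"
proof -
  have cM: "closed M" using assms(1) by (simp add: closed_manifold_def compact_imp_closed)
  have A: "R2_action M \<phi>" using assms(2) by (simp add: A1_action_def)
  have pM: "p \<in> M" and qM: "q \<in> M" using assms(3,4) by (auto simp: dense_orbit_def)
  have I: "isotropy \<phi> p = isotropy \<phi> q"
    using iso_sub[OF cM A assms(3) qM] iso_sub[OF cM A assms(4) pM] by blast
  define f where "f = (\<lambda>x. \<phi> (SOME \<omega>. \<phi> \<omega> p = x) q)"
  define g where "g = (\<lambda>x. \<phi> (SOME \<omega>. \<phi> \<omega> q = x) p)"
  have e1: "\<And>\<omega> \<eta>. \<phi> \<omega> p = \<phi> \<eta> p \<Longrightarrow> \<phi> \<omega> q = \<phi> \<eta> q"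
    using same_iso_eq[OF A pM qM I] by blast
  have e2: "\<And>\<omega> \<eta>. \<phi> \<omega> q = \<phi> \<eta> q \<Longrightarrow> \<phi> \<omega> p = \<phi> \<eta> p"
    using same_iso_eq[OF A qM pM I[symmetric]] by blast
  note F = cont_orbit[OF e1 f_def]
  note G = cont_orbit[OF e2 g_def]
  have "homeomorphic_maps (orbit_topology \<phi> p) (orbit_topology \<phi> q) f g"
    unfolding homeomorphic_maps_def topspace_orbit
    using F G by (auto simp: orbit_def)
  then show ?thesis using I homeomorphic_space_def by blast
qed

end
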